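(* Let $\varphi\in\mathcal{A}$ be w.h.i.s. Then the algebra of Casimirs of $(\mathcal{A},\{\cdot,\cdot\}_\varphi)$ is $H^0(\mathcal{A},\varphi)=\mathrm{Cas}(\mathcal{A},\varphi)=\{f\in\mathcal{A}\mid \vec\nabla f\times\vec\nabla\varphi=\vec 0\}=\bigoplus_{i\in\mathbf{N}}\mathbf{F}\varphi^i=\mathbf{F}[\varphi].$
   Context: $\mathbf{F}$ is a field of characteristic zero and $\mathcal{A}=\mathbf{F}[x,y,z]$. Elements of $\mathcal{A}^3$ are treated as vector fields: $\vec f\cdot\vec g$, $\vec f\times\vec g$ are the usual inner and cross products, $\vec\nabla f=(\partial f/\partial x,\partial f/\partial y,\partial f/\partial z)$, $\vec\nabla\times$ is the curl and $\mathrm{Div}$ the divergence. Fix positive integers $\varpi_1,\varpi_2,\varpi_3$ without common divisor $>1$ (weights of $x,y,z$). A nonzero polynomial is weight homogeneous of degree $d$ if it is an $\mathbf{F}$-linear combination of monomials $x^ay^bz^c$ with $a\varpi_1+b\varpi_2+c\varpi_3=d$; write $\varpi(f)=d$. $\varphi\in\mathcal{A}$ is w.h.i.s. if it is weight homogeneous and $\mathcal{A}_{sing}:=\mathcal{A}/\langle\partial_x\varphi,\partial_y\varphi,\partial_z\varphi\rangle$ is a nonzero finite-dimensional $\mathbf{F}$-vector space. The Poisson bracket $\{\cdot,\cdot\}_\varphi$ on $\mathcal{A}$ is the biderivation determined by $\{x,y\}_\varphi=\partial\varphi/\partial z$, $\{y,z\}_\varphi=\partial\varphi/\partial x$, $\{z,x\}_\varphi=\partial\varphi/\partial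 y$; its Casimirs are the $f$ with $\{f,\cdot\}_\varphi=0$, i.e. $\vec\nabla f\times\vec\nabla\varphi=\vec 0$. *)

theory Defs
  imports "HOL-Computational_Algebra.Polynomial"
begin

text \<open>F[x,y,z] is represented as ((F[x])[y])[z]: the innermost variable is x,
  the middle one y, the outermost one z.\<close>
type_synonym 'a mpoly3 = "'a poly poly poly"

definition C3 :: "'a::zero \<Rightarrow> 'a mpoly3" where
  "C3 c = [:[:[:c:]:]:]"

definition mcoeff3 :: "'a::zero mpoly3 \<Rightarrow> nat \<Rightarrow> nat \<Rightarrow> nat \<Rightarrow> 'a" where
  "mcoeff3 f a b c = coeff (coeff (coeff f c) b) a"

definition dx :: "'a::field mpoly3 \<Rightarrow> 'a mpoly3" where
  "dx f = map_poly (map_poly pderiv) f"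
definition dy :: "'a::field mpoly3 \<Rightarrow> 'a mpoly3" where
  "dy f = map_poly pderiv f"
definition dz :: "'a::field mpoly3 \<Rightarrow> 'a mpoly3" where
  "dz f = pderiv f"

definition weight_hom ::
  "nat \<Rightarrow> nat \<Rightarrow> nat \<Rightarrow> 'a::zero mpoly3 \<Rightarrow> nat \<Rightarrow> bool" where
  "weight_hom w1 w2 w3 f d \<longleftrightarrow> f \<noteq> 0 \<and>
     (\<forall>a b c. mcoeff3 f a b c \<noteq> 0 \<longrightarrow> a * w1 + b * w2 + c * w3 = d)"

definition in_jac :: "'a::field mpoly3 \<Rightarrow> 'a mpoly3 \<Rightarrow> bool" where
  "in_jac \<phi> f \<longleftrightarrow> (\<exists>a b c. f = a * dx \<phi> + b * dy \<phi> + c * dz \<phi>)"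

text \<open>A_sing = A / Jacobian ideal is nonzero and finite-dimensional over F:
  1 is not in the ideal, and a finite set spans the quotient.\<close>
definition whis :: "nat \<Rightarrow> nat \<Rightarrow> nat \<Rightarrow> 'a::field mpoly3 \<Rightarrow> bool" where
  "whis w1 w2 w3 \<phi> \<longleftrightarrow> (\<exists>d. weight_hom w1 w2 w3 \<phi> d) \<and>
     \<not> in_jac \<phi> 1 \<and>
     (\<exists>S. finite S \<and> (\<forall>f. \<exists>u. in_jac \<phi> (f - (\<Sum>s\<in>S. C3 (u s) * s))))"

text \<open>Poisson bracket {f,g}_phi = grad phi . (grad f x grad g).\<close>
definition pbr :: "'a::field mpoly3 \<Rightarrow> 'a mpoly3 \<Rightarrow> 'a mpoly3 \<Rightarrow> 'a mpoly3" where
  "pbr \<phi> f g = dx \<phi> * (dy f * dz g - dz f * dy g)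
              + dy \<phi> * (dz f * dx g - dx f * dz g)
              + dz \<phi> * (dx f * dy g - dy f * dx g)"

definition Cas :: "'a::field mpoly3 \<Rightarrow> 'a mpoly3 set" where
  "Cas \<phi> = {f. \<forall>g. pbr \<phi> f g = 0}"

definition cross_zero :: "'a::field mpoly3 \<Rightarrow> 'a mpoly3 \<Rightarrow> bool" where
  "cross_zero \<phi> f \<longleftrightarrow>
     dy f * dz \<phi> - dz f * dy \<phi> = 0 \<and>
     dz f * dx \<phi> - dx f * dz \<phi> = 0 \<and>
     dx f * dy \<phi> - dy f * dx \<phi> = 0"

definition eval_at :: "'a::field poly \<Rightarrow> 'a mpoly3 \<Rightarrow> 'a mpoly3" where
  "eval_at q \<phi> = poly (map_poly C3 q) \<phi>"

end

theory Submission
  imports Defs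
begin


lemma sum_hom_add:
  assumes "\<And>a b. D (a + b) = D a + D b" "D 0 = 0"
  shows "D (sum g S) = (\<Sum>i\<in>S. D (g i))"
  by (induction S rule: infinite_finite_induct) (auto simp: assms)

lemma map_poly_deriv_mult:
  fixes D :: "'b::idom \<Rightarrow> 'b"
  assumes add: "\<And>a b. D (a + b) = D a + D b" and z: "D 0 = 0"
    and mul: "\<And>a b. D (a * b) = D a * b + a * D b"
  shows "map_poly D (p * q) = map_poly D p * q + p * map_poly D q"
proof (rule poly_eqI)
  fix n
  have "coeff (map_poly D (p * q)) n = D (\<Sum>i\<le>n. coeff p i * coeff q (n - i))"
    by (simp add: coeff_map_poly z coeff_mult)
  also have "\<dots> = (\<Sum>i\<le>n. D (coeff p i * coeff q (n - i)))"
    by (rule sum_hom_add[OF add z])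
  also have "\<dots> = (\<Sum>i\<le>n. D (coeff p i) * coeff q (n - i)) + (\<Sum>i\<le>n. coeff p i * D (coeff q (n - i)))"
    by (simp add: mul sum.distrib)
  also have "\<dots> = coeff (map_poly D p * q + p * map_poly D q) n"
    by (simp add: coeff_mult coeff_map_poly z)
  finally show "coeff (map_poly D (p * q)) n = coeff (map_poly D p * q + p * map_poly D q) n" .
qed

lemma map_poly_add_hom:
  assumes add: "\<And>a b. D (a + b) = D a + D b" and z: "D 0 = 0"
  shows "map_poly D (p + q) = map_poly D p + map_poly D q"
  by (rule poly_eqI) (simp add: coeff_map_poly z add)

lemma hom_minus:
  fixes D :: "'b::ab_group_add \<Rightarrow> 'c::ab_group_add"
  assumes add: "\<And>a b. D (a + b) = D a + D b"
  shows "D (a - b) = D a - D b"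
proof -
  have "D (a - b) + D b = D a" by (metis add diff_add_cancel)
  then show ?thesis by (simp add: eq_diff_eq)
qed

lemma hom_of_nat:
  fixes D :: "'b::idom \<Rightarrow> 'b"
  assumes add: "\<And>a b. D (a + b) = D a + D b" and z: "D 0 = 0"
  shows "D (of_nat k * a) = of_nat k * D a"
  by (induction k) (simp_all add: z add algebra_simps)

lemma pderiv_map_poly_comm:
  fixes D :: "'b::idom \<Rightarrow> 'b"
  assumes add: "\<And>a b. D (a + b) = D a + D b" and z: "D 0 = 0"
  shows "pderiv (map_poly D p) = map_poly D (pderiv p)"
proof (rule poly_eqI)
  fix n
  show "coeff (pderiv (map_poly D p)) n = coeff (map_poly D (pderiv p)) n"
    using hom_of_nat[OF add z, of "Suc n" "coeff p (Suc n)"]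
    by (simp add: coeff_pderiv coeff_map_poly z)
qed

lemma pderiv_add_hom: "pderiv (a + b) = pderiv a + pderiv b" by (rule pderiv_add)

lemma mpd_add: "map_poly pderiv (a + b) = map_poly pderiv a + map_poly pderiv (b :: 'a::idom poly poly)"
  by (rule map_poly_add_hom) (simp_all add: pderiv_add)

lemma mpd_mult: "map_poly pderiv (a * b) = map_poly pderiv a * b + a * map_poly pderiv (b :: 'a::idom poly poly)"
  by (rule map_poly_deriv_mult) (simp_all add: pderiv_add pderiv_mult algebra_simps)

lemma dx_add: "dx (a + b) = dx a + dx b"
  unfolding dx_def by (rule map_poly_add_hom) (simp_all add: mpd_add)
lemma dx_mult: "dx (a * b) = dx a * b + a * dx b"
  unfolding dx_def by (rule map_poly_deriv_mult) (simp_all add: mpd_add mpd_mult)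
lemma dy_add: "dy (a + b) = dy a + dy b"
  unfolding dy_def by (rule map_poly_add_hom) (simp_all add: pderiv_add)
lemma dy_mult: "dy (a * b) = dy a * b + a * dy b"
  unfolding dy_def by (rule map_poly_deriv_mult) (simp_all add: pderiv_add pderiv_mult algebra_simps)
lemma dz_add: "dz (a + b) = dz a + dz b"
  unfolding dz_def by (rule pderiv_add)
lemma dz_mult: "dz (a * b) = dz a * b + a * dz b"
  unfolding dz_def by (simp add: pderiv_mult algebra_simps)
lemma dx_diff: "dx (a - b) = dx a - dx b" by (rule hom_minus) (rule dx_add)
lemma dy_diff: "dy (a - b) = dy a - dy b" by (rule hom_minus) (rule dy_add)
lemma dz_diff: "dz (a - b) = dz a - dz b" by (rule hom_minus) (rule dz_add)

lemma dx_C3[simp]: "dx (C3 c) = 0" by (simp add: dx_def C3_def map_poly_pCons)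
lemma dy_C3[simp]: "dy (C3 c) = 0" by (simp add: dy_def C3_def map_poly_pCons)
lemma dz_C3[simp]: "dz (C3 c) = 0" by (simp add: dz_def C3_def)
lemma dx_0[simp]: "dx 0 = 0" by (simp add: dx_def)
lemma dy_0[simp]: "dy 0 = 0" by (simp add: dy_def)
lemma dz_0[simp]: "dz 0 = 0" by (simp add: dz_def)

lemma dzdy: "dz (dy f) = dy (dz f)"
  unfolding dz_def dy_def by (rule pderiv_map_poly_comm) (simp_all add: pderiv_add)
lemma dzdx: "dz (dx f) = dx (dz f)"
  unfolding dz_def dx_def by (rule pderiv_map_poly_comm) (simp_all add: mpd_add)
lemma dydx: "dy (dx f) = dx (dy f)"
proof -
  have "map_poly pderiv (map_poly (map_poly pderiv) f) = map_poly (pderiv \<circ> map_poly pderiv) f"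
    by (simp add: map_poly_map_poly)
  also have "pderiv \<circ> map_poly pderiv = map_poly pderiv \<circ> (pderiv :: 'a poly poly \<Rightarrow> _)"
    by (rule ext) (simp add: pderiv_map_poly_comm pderiv_add)
  also have "map_poly (map_poly pderiv \<circ> pderiv) f = map_poly (map_poly pderiv) (map_poly pderiv f)"
    by (simp add: map_poly_map_poly)
  finally show ?thesis by (simp add: dx_def dy_def)
qed


lemma C3_0[simp]: "C3 0 = 0" by (simp add: C3_def)
lemma C3_add: "C3 (a + b) = C3 a + C3 b" by (simp add: C3_def)
lemma C3_mult: "C3 (a * b) = C3 a * C3 b" by (simp add: C3_def mult.commute)
lemma C3_1[simp]: "C3 1 = 1" by (simp add: C3_def pCons_one)
lemma mpd_1[simp]: "map_poly pderiv (1::'a::idom poly poly) = 0"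
  by (simp add: one_pCons map_poly_pCons)
lemma mmpd_1[simp]: "map_poly (map_poly pderiv) (1::'a::idom poly poly poly) = 0"
  by (simp add: one_pCons[where 'a="'a poly poly"] map_poly_pCons)
lemma C3_eq_iff[simp]: "C3 a = C3 b \<longleftrightarrow> a = b" by (simp add: C3_def)

lemma eval_at_pCons: "eval_at (pCons a q) \<phi> = C3 a + \<phi> * eval_at q \<phi>"
  by (simp add: eval_at_def map_poly_pCons)
lemma eval_at_0[simp]: "eval_at 0 \<phi> = 0" by (simp add: eval_at_def)
lemma eval_at_const: "eval_at [:c:] \<phi> = C3 c" by (simp add: eval_at_pCons)
lemma eval_at_add: "eval_at (p + q) \<phi> = eval_at p \<phi> + eval_at q \<phi>"
proof (induction p arbitrary: q)
  case (pCons a p)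
  show ?case
  proof (cases q rule: pCons_cases)
    case (pCons b q')
    then show ?thesis using pCons.IH[of q'] by (simp add: eval_at_pCons C3_add algebra_simps)
  qed
qed simp
lemma eval_at_diff: "eval_at (p - q) \<phi> = eval_at p \<phi> - eval_at q \<phi>"
  by (rule hom_minus) (rule eval_at_add)

lemma chain_rule:
  assumes add: "\<And>a b. D (a + b) = D a + D b" and mul: "\<And>a b. D (a * b) = D a * b + a * D b"
    and c: "\<And>c. D (C3 c) = 0"
  shows "D (eval_at q \<phi>) = eval_at (pderiv q) \<phi> * D \<phi>"
proof (induction q)
  case 0
  have "D 0 = 0" using c[of 0] by simp
  then show ?case by simp
next
  case (pCons a q)
  show ?case
    by (simp add: eval_at_pCons add mul c pCons.IH pderiv_pCons eval_at_add algebra_simps)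
qed

lemma dx_eval: "dx (eval_at q \<phi>) = eval_at (pderiv q) \<phi> * dx \<phi>"
  by (rule chain_rule) (simp_all add: dx_add dx_mult)
lemma dy_eval: "dy (eval_at q \<phi>) = eval_at (pderiv q) \<phi> * dy \<phi>"
  by (rule chain_rule) (simp_all add: dy_add dy_mult)
lemma dz_eval: "dz (eval_at q \<phi>) = eval_at (pderiv q) \<phi> * dz \<phi>"
  by (rule chain_rule) (simp_all add: dz_add dz_mult)

lemma range_cross: "cross_zero \<phi> (eval_at q \<phi>)"
  unfolding cross_zero_def by (simp add: dx_eval dy_eval dz_eval algebra_simps)

definition XX :: "'a::field mpoly3" where "XX = [:[:[:0,1:]:]:]"
definition YY :: "'a::field mpoly3" where "YY = [:[:0,1:]:]"
definition ZZ :: "'a::field mpoly3" where "ZZ = [:0,1:]"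

lemma dXX: "dx XX = 1" "dy XX = 0" "dz XX = 0"
  by (simp_all add: XX_def dx_def dy_def dz_def map_poly_pCons pderiv_pCons pCons_one)
lemma dYY: "dx YY = 0" "dy YY = 1" "dz YY = 0"
  by (simp_all add: YY_def dx_def dy_def dz_def map_poly_pCons pderiv_pCons pCons_one)
lemma dZZ: "dx ZZ = 0" "dy ZZ = 0" "dz ZZ = 1"
  by (simp_all add: ZZ_def dx_def dy_def dz_def map_poly_pCons pderiv_pCons pCons_one)

lemma Cas_eq: "Cas \<phi> = {f. cross_zero \<phi> f}"
proof (intro set_eqI iffI; simp)
  fix f assume "f \<in> Cas \<phi>"
  then have "pbr \<phi> f XX = 0" "pbr \<phi> f YY = 0" "pbr \<phi> f ZZ = 0" by (auto simp: Cas_def)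
  then show "cross_zero \<phi> f"
    unfolding pbr_def cross_zero_def dXX dYY dZZ by (simp_all add: algebra_simps)
next
  fix f assume "cross_zero \<phi> f"
  then have e: "dy f * dz \<phi> = dz f * dy \<phi>" "dz f * dx \<phi> = dx f * dz \<phi>" "dx f * dy \<phi> = dy f * dx \<phi>"
    by (auto simp: cross_zero_def)
  have "pbr \<phi> f g = dx g * (dy \<phi> * dz f - dz \<phi> * dy f) + dy g * (dz \<phi> * dx f - dx \<phi> * dz f)
     + dz g * (dx \<phi> * dy f - dy \<phi> * dx f)" for g
    unfolding pbr_def by (simp add: algebra_simps)
  then show "f \<in> Cas \<phi>" unfolding Cas_def using e by (simp add: mult.commute)
qed


definition C2 :: "'a::zero \<Rightarrow> 'a poly poly" where "C2 c = [:[:c:]:]"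

lemma eval_at_pcompose: "eval_at r \<phi> = pcompose (map_poly C2 r) \<phi>"
  by (induction r) (simp_all add: eval_at_pCons C2_def map_poly_pCons pcompose_pCons C3_def)

lemma eval_at_eq_0:
  assumes "degree \<phi> > 0" "eval_at r \<phi> = 0"
  shows "r = 0"
proof -
  have "map_poly C2 r = 0" using assms pcompose_eq_0 eval_at_pcompose by metis
  then show ?thesis by (simp add: map_poly_eq_0_iff C2_def)
qed

lemma eval_at_inj: assumes "degree \<phi> > 0" shows "inj (\<lambda>q. eval_at q \<phi>)"
proof (rule injI)
  fix p q assume "eval_at p \<phi> = eval_at q \<phi>"
  then have "eval_at (p - q) \<phi> = 0" by (simp add: eval_at_diff)
  then have "p - q = 0" by (rule eval_at_eq_0[OF assms])
  then show "p = q" by simp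
qed

lemma mpoly3_eqI: "(\<And>a b c. mcoeff3 f a b c = mcoeff3 g a b c) \<Longrightarrow> f = g"
  unfolding mcoeff3_def by (intro poly_eqI) blast

lemma coeff_const_mult[simp]: "coeff ([:a:] * p) n = a * coeff p n"
  by simp

lemma coeff_of_nat_mult: "coeff (of_nat k * p) n = of_nat k * coeff (p :: 'a::comm_semiring_1 poly) n"
  by (simp add: of_nat_poly)

lemma mcoeff3_add: "mcoeff3 (f + g) a b c = mcoeff3 f a b c + mcoeff3 g a b c"
  by (simp add: mcoeff3_def)
lemma mcoeff3_C3: "mcoeff3 (C3 k * f) a b c = k * mcoeff3 f a b c"
  by (simp add: mcoeff3_def C3_def)

lemma coeff_X_mult: "coeff ([:0, 1:] * (p::'a::comm_semiring_1 poly)) n = (if n = 0 then 0 else coeff p (n - 1))"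
  by (simp add: coeff_pCons split: nat.splits)

lemma mcoeff3_XX: "mcoeff3 (XX * dx h) a b c = of_nat a * mcoeff3 (h::'a::field mpoly3) a b c"
  by (cases a) (simp_all add: mcoeff3_def XX_def dx_def coeff_map_poly coeff_X_mult coeff_pderiv)
lemma mcoeff3_YY: "mcoeff3 (YY * dy h) a b c = of_nat b * mcoeff3 (h::'a::field mpoly3) a b c"
  by (cases b) (simp_all add: mcoeff3_def YY_def dy_def coeff_map_poly coeff_X_mult coeff_pderiv coeff_of_nat_mult del: of_nat_Suc)
lemma mcoeff3_ZZ: "mcoeff3 (ZZ * dz h) a b c = of_nat c * mcoeff3 (h::'a::field mpoly3) a b c"
  by (cases c) (simp_all add: mcoeff3_def ZZ_def dz_def coeff_map_poly coeff_X_mult coeff_pderiv coeff_of_nat_mult del: of_nat_Suc)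

definition EE :: "nat \<Rightarrow> nat \<Rightarrow> nat \<Rightarrow> 'a::field mpoly3 \<Rightarrow> 'a mpoly3" where
  "EE w1 w2 w3 h = C3 (of_nat w1) * (XX * dx h) + C3 (of_nat w2) * (YY * dy h) + C3 (of_nat w3) * (ZZ * dz h)"

lemma mcoeff3_EE: "mcoeff3 (EE w1 w2 w3 h) a b c = of_nat (a * w1 + b * w2 + c * w3) * mcoeff3 h a b c"
  unfolding EE_def mcoeff3_add mcoeff3_C3 mcoeff3_XX mcoeff3_YY mcoeff3_ZZ by (simp add: algebra_simps)

lemma euler:
  assumes "weight_hom w1 w2 w3 \<phi> d"
  shows "EE w1 w2 w3 \<phi> = C3 (of_nat d) * \<phi>"
proof (rule mpoly3_eqI)
  fix a b c
  show "mcoeff3 (EE w1 w2 w3 \<phi>) a b c = mcoeff3 (C3 (of_nat d) * \<phi>) a b c"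
    using assms unfolding weight_hom_def
    by (cases "mcoeff3 \<phi> a b c = 0") (simp_all add: mcoeff3_EE mcoeff3_C3)
qed

lemma degree_EE: "degree (EE w1 w2 w3 h) \<le> degree h"
proof (rule degree_le, intro allI impI)
  fix i assume "degree h < i"
  then have "coeff h i = 0" by (simp add: coeff_eq_0)
  then have "mcoeff3 (EE w1 w2 w3 h) a b i = 0" for a b by (subst mcoeff3_EE) (simp add: mcoeff3_def)
  then show "coeff (EE w1 w2 w3 h) i = 0" by (simp add: mcoeff3_def poly_eq_iff)
qed

lemma sum_split_k:
  fixes f :: "nat \<Rightarrow> 'a::comm_monoid_add"
  assumes "k \<le> Suc M"
  shows "(\<Sum>m\<le>Suc M. f m) = f k + (\<Sum>n\<le>M. f (if n < k then n else Suc n))"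
proof -
  let ?s = "\<lambda>n. if n < k then n else Suc n"
  have inj: "inj_on ?s {..M}" by (auto simp: inj_on_def split: if_splits)
  have img: "{..Suc M} = insert k (?s ` {..M})"
  proof (intro set_eqI iffI)
    fix m assume "m \<in> {..Suc M}"
    then show "m \<in> insert k (?s ` {..M})"
    proof (cases "m < k")
      case True then show ?thesis using assms by (auto intro!: image_eqI[of _ _ m])
    next
      case False
      then show ?thesis using \<open>m \<in> {..Suc M}\<close>
        by (cases "m = k") (auto intro!: image_eqI[of _ _ "m - 1"])
    qed
  next
    fix m assume "m \<in> insert k (?s ` {..M})" then show "m \<in> {..Suc M}" using assms by auto
  qed
  have "k \<notin> ?s ` {..M}" by auto
  then have "sum f (insert k (?s ` {..M})) = f k + sum f (?s ` {..M})" by (intro sum.insert) auto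
  also have "sum f (?s ` {..M}) = (\<Sum>n\<le>M. f (?s n))" by (simp only: sum.reindex[OF inj] o_def)
  finally show ?thesis unfolding img .
qed

lemma lin_dep:
  fixes u :: "nat \<Rightarrow> 'b \<Rightarrow> 'a::field"
  assumes "finite S"
  shows "\<exists>c. (\<exists>n\<le>card S. c n \<noteq> 0) \<and> (\<forall>s\<in>S. (\<Sum>n\<le>card S. c n * u n s) = 0)"
  using assms
proof (induction S arbitrary: u rule: finite_induct)
  case empty
  show ?case by (rule exI[of _ "\<lambda>_. 1"]) auto
next
  case (insert t S)
  define M where "M = card S"
  have cardS: "card (insert t S) = Suc M" using insert by (simp add: M_def)
  show ?case
  proof (cases "\<forall>n\<le>Suc M. u n t = 0")
    case True
    obtain c where c: "\<exists>n\<le>M. c n \<noteq> 0" "\<forall>s\<in>S. (\<Sum>n\<le>M. c n * u n s) = 0"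
      using insert.IH[of u] by (auto simp: M_def)
    define c' where "c' n = (if n \<le> M then c n else 0)" for n
    have "(\<Sum>n\<le>Suc M. c' n * u n s) = (\<Sum>n\<le>M. c n * u n s)" for s
      by (simp add: c'_def)
    moreover have "(\<Sum>n\<le>M. c n * u n t) = 0" using True by simp
    ultimately show ?thesis unfolding cardS using c
      by (intro exI[of _ c']) (auto simp: c'_def)
  next
    case False
    then obtain k where k: "k \<le> Suc M" "u k t \<noteq> 0" by auto
    let ?s = "\<lambda>n. if n < k then n else Suc n"
    define u' where "u' n s = u (?s n) s - (u (?s n) t / u k t) * u k s" for n s
    obtain c where c: "\<exists>n\<le>M. c n \<noteq> 0" "\<forall>s\<in>S. (\<Sum>n\<le>M. c n * u' n s) = 0"
      using insert.IH[of u'] by (auto simp: M_def)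
    define c' where "c' m = (if m = k then - (\<Sum>n\<le>M. c n * u (?s n) t) / u k t
       else if m < k then c m else c (m - 1))" for m
    have c'2: "c' (?s n) = c n" for n by (auto simp: c'_def)
    have comb: "(\<Sum>m\<le>Suc M. c' m * u m s) = (\<Sum>n\<le>M. c n * u' n s)" for s
    proof -
      have "(\<Sum>m\<le>Suc M. c' m * u m s) = c' k * u k s + (\<Sum>n\<le>M. c n * u (?s n) s)"
        by (subst sum_split_k[OF k(1)]) (simp only: c'2)
      also have "\<dots> = (\<Sum>n\<le>M. c n * u' n s)"
        unfolding u'_def c'_def using k(2)
        by (simp add: algebra_simps sum_subtractf sum_distrib_left sum_divide_distrib)
      finally show ?thesis .
    qed
    have ut: "u' n t = 0" for n using k(2) by (simp add: u'_def)
    obtain n where n: "n \<le> M" "c n \<noteq> 0" using c(1) by auto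
    have "?s n \<le> Suc M" "c' (?s n) \<noteq> 0" using n c'2 by auto
    then show ?thesis unfolding cardS using c(2) comb ut
      by (intro exI[of _ c']) auto
  qed
qed


lemma in_jac_0: "in_jac \<phi> 0" unfolding in_jac_def by (rule exI[of _ 0], rule exI[of _ 0], rule exI[of _ 0]) simp
lemma in_jac_add: "in_jac \<phi> f \<Longrightarrow> in_jac \<phi> g \<Longrightarrow> in_jac \<phi> (f + g)"
  unfolding in_jac_def
proof (elim exE)
  fix a b c a' b' c'
  assume "f = a * dx \<phi> + b * dy \<phi> + c * dz \<phi>" "g = a' * dx \<phi> + b' * dy \<phi> + c' * dz \<phi>"
  then show "\<exists>a b c. f + g = a * dx \<phi> + b * dy \<phi> + c * dz \<phi>"
    by (intro exI[of _ "a + a'"] exI[of _ "b + b'"] exI[of _ "c + c'"]) (simp add: algebra_simps)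
qed
lemma in_jac_mult: "in_jac \<phi> f \<Longrightarrow> in_jac \<phi> (h * f)"
  unfolding in_jac_def
proof (elim exE)
  fix a b c
  assume "f = a * dx \<phi> + b * dy \<phi> + c * dz \<phi>"
  then show "\<exists>a b c. h * f = a * dx \<phi> + b * dy \<phi> + c * dz \<phi>"
    by (intro exI[of _ "h * a"] exI[of _ "h * b"] exI[of _ "h * c"]) (simp add: algebra_simps)
qed
lemma in_jac_sum: "(\<And>i. i \<in> A \<Longrightarrow> in_jac \<phi> (g i)) \<Longrightarrow> in_jac \<phi> (sum g A)"
  by (induction A rule: infinite_finite_induct) (auto intro: in_jac_0 in_jac_add)

lemma C3_sum: "C3 (sum g A) = (\<Sum>i\<in>A. C3 (g i))"
  by (rule sum_hom_add) (simp_all add: C3_add)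


lemma fin_dep:
  fixes e :: "nat \<Rightarrow> 'a::field mpoly3"
  assumes "whis w1 w2 w3 \<phi>"
  shows "\<exists>N c. (\<exists>n\<le>N. c n \<noteq> 0) \<and> in_jac \<phi> (\<Sum>n\<le>N. C3 (c n) * e n)"
proof -
  obtain S where S: "finite S" "\<forall>f. \<exists>u. in_jac \<phi> (f - (\<Sum>s\<in>S. C3 (u s) * s))"
    using assms by (auto simp: whis_def)
  have "\<forall>n. \<exists>u. in_jac \<phi> (e n - (\<Sum>s\<in>S. C3 (u s) * s))" using S(2) by blast
  from choice[OF this] obtain u where u: "\<And>n. in_jac \<phi> (e n - (\<Sum>s\<in>S. C3 (u n s) * s))" by blast
  obtain c where c: "\<exists>n\<le>card S. c n \<noteq> 0" "\<forall>s\<in>S. (\<Sum>n\<le>card S. c n * u n s) = 0"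
    using lin_dep[OF S(1), of u] by blast
  let ?N = "card S"
  have "(\<Sum>n\<le>?N. C3 (c n) * e n) = (\<Sum>n\<le>?N. C3 (c n) * (e n - (\<Sum>s\<in>S. C3 (u n s) * s)))
     + (\<Sum>n\<le>?N. (\<Sum>s\<in>S. C3 (c n) * (C3 (u n s) * s)))"
  proof -
    have "(\<Sum>n\<le>?N. C3 (c n) * e n) = (\<Sum>n\<le>?N. C3 (c n) * (e n - (\<Sum>s\<in>S. C3 (u n s) * s))
       + C3 (c n) * (\<Sum>s\<in>S. C3 (u n s) * s))"
      by (rule sum.cong) (simp_all add: right_diff_distrib)
    then show ?thesis by (simp only: sum.distrib sum_distrib_left)
  qed
  also have "(\<Sum>n\<le>?N. (\<Sum>s\<in>S. C3 (c n) * (C3 (u n s) * s))) = (\<Sum>s\<in>S. C3 (\<Sum>n\<le>?N. c n * u n s) * s)"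
    by (subst sum.swap) (simp add: C3_sum sum_distrib_right C3_mult mult.assoc)
  also have "\<dots> = 0" using c(2) by simp
  finally have "(\<Sum>n\<le>?N. C3 (c n) * e n) = (\<Sum>n\<le>?N. C3 (c n) * (e n - (\<Sum>s\<in>S. C3 (u n s) * s)))"
    by simp
  moreover have "in_jac \<phi> \<dots>" by (intro in_jac_sum in_jac_mult u)
  ultimately have "in_jac \<phi> (\<Sum>n\<le>?N. C3 (c n) * e n)" by simp
  then show ?thesis using c(1) by blast
qed



lemma drop_lead:
  fixes p :: "'b::comm_ring_1 poly"
  defines "p' \<equiv> p - monom (lead_coeff p) (degree p)"
  shows "p' = 0 \<or> degree p' < degree p"
proof -
  have z: "coeff p' i = 0" if "i \<ge> degree p" for i
    using that by (cases "i = degree p") (auto simp: p'_def coeff_monom coeff_eq_0)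
  show ?thesis
  proof (cases "p' = 0")
    case False
    then have "coeff p' (degree p') \<noteq> 0" by simp
    then have "\<not> degree p' \<ge> degree p" using z by blast
    then show ?thesis by simp
  qed simp
qed

lemma const_dvd_cancel:
  fixes r :: "'b::idom" and q :: "'b poly"
  assumes u: "lead_coeff q dvd 1"
  shows "[:r:] dvd q * \<alpha> \<Longrightarrow> [:r:] dvd \<alpha>"
proof (induction "degree \<alpha>" arbitrary: \<alpha> rule: less_induct)
  case less
  show ?case
  proof (cases "\<alpha> = 0")
    case False
    have q0: "q \<noteq> 0" using u by auto
    have "r dvd coeff (q * \<alpha>) (degree q + degree \<alpha>)"
      using less.prems const_poly_dvd_iff by blast
    then have rl: "r dvd lead_coeff q * lead_coeff \<alpha>" by (simp add: coeff_mult_degree_sum)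
    then have r1: "r dvd lead_coeff \<alpha>"
    proof -
      obtain v where v: "1 = lead_coeff q * v" using u by (auto elim: dvdE)
      have "r dvd v * (lead_coeff q * lead_coeff \<alpha>)" using rl by (rule dvd_mult)
      also have "v * (lead_coeff q * lead_coeff \<alpha>) = lead_coeff \<alpha>" using v by (simp add: algebra_simps)
      finally show ?thesis .
    qed
    define \<alpha>' where "\<alpha>' = \<alpha> - monom (lead_coeff \<alpha>) (degree \<alpha>)"
    have m: "[:r:] dvd monom (lead_coeff \<alpha>) (degree \<alpha>)"
      using r1 by (simp add: const_poly_dvd_iff coeff_monom)
    then have "[:r:] dvd q * monom (lead_coeff \<alpha>) (degree \<alpha>)" by (rule dvd_mult)
    then have "[:r:] dvd q * \<alpha>'" using less.prems by (simp add: \<alpha>'_def right_diff_distrib dvd_diff)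
    moreover have "\<alpha>' = 0 \<or> degree \<alpha>' < degree \<alpha>" unfolding \<alpha>'_def by (rule drop_lead)
    ultimately have "[:r:] dvd \<alpha>'" using less.hyps by auto
    then have "[:r:] dvd \<alpha>' + monom (lead_coeff \<alpha>) (degree \<alpha>)" using m by (rule dvd_add)
    then show ?thesis by (simp add: \<alpha>'_def)
  qed simp
qed




definition K2 :: "'a::zero poly \<Rightarrow> 'a mpoly3" where "K2 p = [:[:p:]:]"

lemma K2_add: "K2 (p + q) = K2 p + K2 q" by (simp add: K2_def)
lemma K2_mult: "K2 (p * q) = K2 p * K2 (q :: 'a::comm_ring_1 poly)" by (simp add: K2_def mult.commute)
lemma K2_1: "K2 1 = (1 :: 'a::comm_ring_1 mpoly3)" by (simp add: K2_def pCons_one)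
lemma K2_power: "K2 (p ^ n) = K2 p ^ n" for p :: "'a::comm_ring_1 poly"
  by (induction n) (simp_all add: K2_1 K2_mult)
lemma K2_sum: "K2 (sum g A) = (\<Sum>i\<in>A. K2 (g i))"
  by (rule sum_hom_add) (simp_all add: K2_add K2_def)
lemma K2_eq_0: "K2 p = 0 \<longleftrightarrow> p = 0" by (simp add: K2_def)
lemma C3_K2: "C3 c = K2 [:c:]" by (simp add: C3_def K2_def)
lemma XX_K2: "XX = K2 [:0, 1:]" by (simp add: XX_def K2_def)

lemma const_X_pow: "[:k:] * [:0, 1:] ^ n = monom (k::'a::comm_ring_1) n"
  by (simp add: monom_altdef)

lemma coeff_sum_monom: "coeff (\<Sum>n\<le>N. monom (f n) n) m = (if m \<le> N then f m else 0)"
  by (simp add: coeff_sum coeff_monom)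

lemma x_elem:
  assumes "whis w1 w2 w3 (\<phi> :: 'a::field mpoly3)"
  shows "\<exists>P. P \<noteq> 0 \<and> in_jac \<phi> (K2 P)"
proof -
  obtain N c where c: "\<exists>n\<le>N. c n \<noteq> 0" "in_jac \<phi> (\<Sum>n\<le>N. C3 (c n) * XX ^ n)"
    using fin_dep[OF assms, of "\<lambda>n. XX ^ n"] by blast
  have "(\<Sum>n\<le>N. C3 (c n) * XX ^ n) = K2 (\<Sum>n\<le>N. monom (c n) n)"
  proof -
    have "(\<Sum>n\<le>N. C3 (c n) * XX ^ n) = (\<Sum>n\<le>N. K2 (monom (c n) n))"
      by (intro sum.cong refl) (simp only: C3_K2 XX_K2 K2_power[symmetric] K2_mult[symmetric] const_X_pow)
    then show ?thesis by (simp add: K2_sum)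
  qed
  moreover have "(\<Sum>n\<le>N. monom (c n) n) \<noteq> 0"
  proof
    assume "(\<Sum>n\<le>N. monom (c n) n) = 0"
    then have "coeff (\<Sum>n\<le>N. monom (c n) n) m = 0" for m by simp
    then show False using c(1) by (metis coeff_sum_monom)
  qed
  ultimately show ?thesis using c(2) by metis
qed

lemma z_elem:
  assumes "whis w1 w2 w3 (\<phi> :: 'a::field mpoly3)"
  shows "\<exists>Q. Q \<noteq> 0 \<and> in_jac \<phi> (map_poly C2 Q)"
proof -
  obtain N c where c: "\<exists>n\<le>N. c n \<noteq> 0" "in_jac \<phi> (\<Sum>n\<le>N. C3 (c n) * ZZ ^ n)"
    using fin_dep[OF assms, of "\<lambda>n. ZZ ^ n"] by blast
  have "(\<Sum>n\<le>N. C3 (c n) * ZZ ^ n) = (\<Sum>n\<le>N. monom (C2 (c n)) n)"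
    by (simp add: C3_def C2_def ZZ_def monom_altdef)
  also have "\<dots> = map_poly C2 (\<Sum>n\<le>N. monom (c n) n)"
    by (rule poly_eqI) (simp add: coeff_sum_monom coeff_map_poly C2_def)
  finally have e: "(\<Sum>n\<le>N. C3 (c n) * ZZ ^ n) = map_poly C2 (\<Sum>n\<le>N. monom (c n) n)" .
  moreover have "(\<Sum>n\<le>N. monom (c n) n) \<noteq> 0"
  proof
    assume "(\<Sum>n\<le>N. monom (c n) n) = 0"
    then have "coeff (\<Sum>n\<le>N. monom (c n) n) m = 0" for m by simp
    then show False using c(1) by (metis coeff_sum_monom)
  qed
  ultimately show ?thesis using c(2) by metis
qed

lemma deg_pos:
  assumes "whis w1 w2 w3 (\<phi> :: 'a::field mpoly3)"
  shows "degree \<phi> > 0"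
proof (rule ccontr)
  assume "\<not> degree \<phi> > 0"
  then have "degree \<phi> = 0" by simp
  then obtain \<phi>0 where phi: "\<phi> = [:\<phi>0:]" by (metis degree_eq_zeroE)
  obtain Q where Q: "Q \<noteq> 0" "in_jac \<phi> (map_poly C2 Q)" using z_elem[OF assms] by blast
  then obtain a b c where abc: "map_poly C2 Q = a * dx \<phi> + b * dy \<phi> + c * dz \<phi>"
    by (auto simp: in_jac_def)
  define u where "u = map_poly pderiv \<phi>0"
  define v where "v = pderiv \<phi>0"
  have d: "dx \<phi> = [:u:]" "dy \<phi> = [:v:]" "dz \<phi> = 0"
    by (simp_all add: phi dx_def dy_def dz_def u_def v_def map_poly_pCons pderiv_pCons)
  obtain m where m: "coeff Q m \<noteq> 0" using Q(1) by (metis leading_coeff_0_iff)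
  define k where "k = coeff Q m"
  have "coeff (map_poly C2 Q) m = coeff a m * u + coeff b m * v"
    using abc d by simp
  then have ck: "C2 k = coeff a m * u + coeff b m * v" by (simp add: coeff_map_poly C2_def k_def)
  have "[:C2 (1/k) * coeff a m:] * dx \<phi> + [:C2 (1/k) * coeff b m:] * dy \<phi> + 0 * dz \<phi>
      = [:C2 (1/k) * C2 k:]"
    unfolding d ck by (simp add: algebra_simps)
  also have "\<dots> = 1" using m by (simp add: C2_def k_def pCons_one mult.commute)
  finally have "in_jac \<phi> 1" unfolding in_jac_def by metis
  then show False using assms by (simp add: whis_def)
qed



lemma EE_rel:
  assumes cz: "cross_zero \<phi> f" and wh: "weight_hom w1 w2 w3 \<phi> d"
  shows "EE w1 w2 w3 f * dx \<phi> = C3 (of_nat d) * \<phi> * dx f"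
    "EE w1 w2 w3 f * dy \<phi> = C3 (of_nat d) * \<phi> * dy f"
    "EE w1 w2 w3 f * dz \<phi> = C3 (of_nat d) * \<phi> * dz f"
proof -
  have r1: "dy f * dz \<phi> = dz f * dy \<phi>" and r2: "dz f * dx \<phi> = dx f * dz \<phi>"
    and r3: "dx f * dy \<phi> = dy f * dx \<phi>" using cz by (auto simp: cross_zero_def)
  let ?a = "C3 (of_nat w1) * XX" and ?b = "C3 (of_nat w2) * YY" and ?c = "C3 (of_nat w3) * ZZ"
  have E: "EE w1 w2 w3 h = ?a * dx h + ?b * dy h + ?c * dz h" for h
    by (simp add: EE_def mult.assoc)
  have "EE w1 w2 w3 f * dx \<phi> = ?a * (dx f * dx \<phi>) + ?b * (dy f * dx \<phi>) + ?c * (dz f * dx \<phi>)"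
    unfolding E by (simp add: algebra_simps)
  also have "\<dots> = dx f * EE w1 w2 w3 \<phi>" unfolding E r2 r3[symmetric] by (simp add: algebra_simps)
  finally show "EE w1 w2 w3 f * dx \<phi> = C3 (of_nat d) * \<phi> * dx f" by (simp add: euler[OF wh] algebra_simps)
  have "EE w1 w2 w3 f * dy \<phi> = ?a * (dx f * dy \<phi>) + ?b * (dy f * dy \<phi>) + ?c * (dz f * dy \<phi>)"
    unfolding E by (simp add: algebra_simps)
  also have "\<dots> = dy f * EE w1 w2 w3 \<phi>" unfolding E r1[symmetric] r3 by (simp add: algebra_simps)
  finally show "EE w1 w2 w3 f * dy \<phi> = C3 (of_nat d) * \<phi> * dy f" by (simp add: euler[OF wh] algebra_simps)
  have "EE w1 w2 w3 f * dz \<phi> = ?a * (dx f * dz \<phi>) + ?b * (dy f * dz \<phi>) + ?c * (dz f * dz \<phi>)"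
    unfolding E by (simp add: algebra_simps)
  also have "\<dots> = dz f * EE w1 w2 w3 \<phi>" unfolding E r1 r2[symmetric] by (simp add: algebra_simps)
  finally show "EE w1 w2 w3 f * dz \<phi> = C3 (of_nat d) * \<phi> * dz f" by (simp add: euler[OF wh] algebra_simps)
qed

lemma EE_jac:
  assumes cz: "cross_zero \<phi> f" and wh: "weight_hom w1 w2 w3 \<phi> d" and j: "in_jac \<phi> h"
  shows "\<phi> dvd EE w1 w2 w3 f * h"
proof -
  obtain a b c where h: "h = a * dx \<phi> + b * dy \<phi> + c * dz \<phi>" using j by (auto simp: in_jac_def)
  have "EE w1 w2 w3 f * h = a * (EE w1 w2 w3 f * dx \<phi>) + b * (EE w1 w2 w3 f * dy \<phi>) + c * (EE w1 w2 w3 f * dz \<phi>)"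
    unfolding h by (simp add: algebra_simps)
  also have "\<dots> = \<phi> * (C3 (of_nat d) * (a * dx f + b * dy f + c * dz f))"
    unfolding EE_rel[OF cz wh] by (simp add: algebra_simps)
  finally show ?thesis by simp
qed

lemma C2_unit: "(c::'a::field) \<noteq> 0 \<Longrightarrow> C2 c dvd 1"
  by (rule dvdI[of _ _ "C2 (1/c)"]) (simp add: C2_def pCons_one)

lemma phi_dvd_EE:
  assumes w: "whis w1 w2 w3 (\<phi> :: 'a::field mpoly3)" and cz: "cross_zero \<phi> f"
    and wh: "weight_hom w1 w2 w3 \<phi> d"
  shows "\<phi> dvd EE w1 w2 w3 f"
proof -
  obtain P where P: "P \<noteq> 0" "in_jac \<phi> (K2 P)" using x_elem[OF w] by blast
  obtain Q where Q: "Q \<noteq> 0" "in_jac \<phi> (map_poly C2 Q)" using z_elem[OF w] by blast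
  have phi0: "\<phi> \<noteq> 0" using deg_pos[OF w] by auto
  obtain \<alpha> where al: "EE w1 w2 w3 f * K2 P = \<phi> * \<alpha>" using EE_jac[OF cz wh P(2)] by (auto elim: dvdE)
  obtain \<beta> where be: "EE w1 w2 w3 f * map_poly C2 Q = \<phi> * \<beta>" using EE_jac[OF cz wh Q(2)] by (auto elim: dvdE)
  have "\<phi> * (\<alpha> * map_poly C2 Q) = \<phi> * (\<beta> * K2 P)"
  proof -
    have "\<phi> * (\<alpha> * map_poly C2 Q) = (EE w1 w2 w3 f * K2 P) * map_poly C2 Q" by (simp add: al mult.assoc)
    also have "\<dots> = (EE w1 w2 w3 f * map_poly C2 Q) * K2 P" by (simp add: ac_simps)
    also have "\<dots> = \<phi> * (\<beta> * K2 P)" by (simp add: be mult.assoc)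
    finally show ?thesis .
  qed
  then have eq: "map_poly C2 Q * \<alpha> = K2 P * \<beta>" using phi0 by (simp add: mult.commute)
  have lc: "lead_coeff (map_poly C2 Q) dvd 1"
    using Q(1) by (simp add: degree_map_poly C2_def coeff_map_poly C2_unit[unfolded C2_def])
  have "[:[:P:]:] dvd map_poly C2 Q * \<alpha>" unfolding eq K2_def by (rule dvd_triv_left)
  then have "[:[:P:]:] dvd \<alpha>" by (rule const_dvd_cancel[OF lc])
  then obtain \<gamma> where "\<alpha> = K2 P * \<gamma>" unfolding K2_def by (auto elim: dvdE)
  then have "K2 P * EE w1 w2 w3 f = K2 P * (\<phi> * \<gamma>)" using al by (simp add: ac_simps)
  then have "EE w1 w2 w3 f = \<phi> * \<gamma>" using P(1) by (simp add: K2_eq_0)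
  then show ?thesis by simp
qed



lemma d_pos:
  assumes w: "whis w1 w2 w3 (\<phi> :: 'a::field mpoly3)" and wh: "weight_hom w1 w2 w3 \<phi> d" and w3: "w3 > 0"
  shows "d > 0"
proof -
  have dp: "degree \<phi> > 0" using deg_pos[OF w] .
  then have "coeff \<phi> (degree \<phi>) \<noteq> 0" by auto
  then obtain b where "coeff (coeff \<phi> (degree \<phi>)) b \<noteq> 0" by (metis leading_coeff_0_iff)
  then obtain a where "coeff (coeff (coeff \<phi> (degree \<phi>)) b) a \<noteq> 0" by (metis leading_coeff_0_iff)
  then have "a * w1 + b * w2 + degree \<phi> * w3 = d" using wh by (auto simp: weight_hom_def mcoeff3_def)
  moreover have "degree \<phi> * w3 > 0" using dp w3 by simp
  ultimately show ?thesis by linarith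
qed

lemma C3_inv: "(k::'a::field) \<noteq> 0 \<Longrightarrow> C3 (1 / k) * C3 k = 1"
  by (simp add: C3_mult[symmetric])

lemma degree_C3_mult: "(k::'a::field) \<noteq> 0 \<Longrightarrow> degree (C3 k * g) = degree g"
  by (simp add: C3_def)

lemma grad_factor:
  assumes w: "whis w1 w2 w3 (\<phi> :: 'a::field_char_0 mpoly3)" and wh: "weight_hom w1 w2 w3 \<phi> d"
    and w3: "w3 > 0" and cz: "cross_zero \<phi> f"
  shows "\<exists>g. dx f = g * dx \<phi> \<and> dy f = g * dy \<phi> \<and> dz f = g * dz \<phi> \<and> (g = 0 \<or> degree g < degree f)"
proof -
  obtain \<gamma> where ga: "EE w1 w2 w3 f = \<phi> * \<gamma>" using phi_dvd_EE[OF w cz wh] by (auto elim: dvdE)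
  have phi0: "\<phi> \<noteq> 0" using deg_pos[OF w] by auto
  have k0: "(of_nat d :: 'a) \<noteq> 0" using d_pos[OF w wh w3] by simp
  define g where "g = C3 (1 / of_nat d) * \<gamma>"
  have gen: "D f = g * D \<phi>" if r: "EE w1 w2 w3 f * D \<phi> = C3 (of_nat d) * \<phi> * D f" for D
  proof -
    have "\<phi> * (\<gamma> * D \<phi>) = \<phi> * (C3 (of_nat d) * D f)" using r ga by (simp add: ac_simps)
    then have "\<gamma> * D \<phi> = C3 (of_nat d) * D f" using phi0 by simp
    have "D f = (C3 (1 / of_nat d) * C3 (of_nat d)) * D f" using C3_inv[OF k0] by simp
    also have "\<dots> = C3 (1 / of_nat d) * (C3 (of_nat d) * D f)" by (simp add: mult.assoc)
    also have "\<dots> = C3 (1 / of_nat d) * (\<gamma> * D \<phi>)" using \<open>\<gamma> * D \<phi> = _\<close> by simp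
    also have "\<dots> = g * D \<phi>" by (simp add: g_def mult.assoc)
    finally show ?thesis .
  qed
  have deg: "g = 0 \<or> degree g < degree f"
  proof (cases "\<gamma> = 0")
    case True then show ?thesis by (simp add: g_def)
  next
    case False
    have "degree \<phi> + degree \<gamma> = degree (EE w1 w2 w3 f)" using ga phi0 False by (simp add: degree_mult_eq)
    also have "\<dots> \<le> degree f" by (rule degree_EE)
    finally have "degree \<gamma> < degree f" using deg_pos[OF w] by simp
    moreover have "degree g = degree \<gamma>" unfolding g_def using k0 by (simp add: degree_C3_mult)
    ultimately show ?thesis by simp
  qed
  show ?thesis using gen[OF EE_rel(1)[OF cz wh]] gen[OF EE_rel(2)[OF cz wh]] gen[OF EE_rel(3)[OF cz wh]] deg
    by blast
qed

lemma grad_cross: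
  assumes gx: "dx f = g * dx \<phi>" and gy: "dy f = g * dy \<phi>" and gz: "dz f = g * dz \<phi>"
  shows "cross_zero \<phi> g"
proof -
  have 1: "dy (dx f) = dy g * dx \<phi> + g * dy (dx \<phi>)" unfolding gx by (rule dy_mult)
  have 2: "dx (dy f) = dx g * dy \<phi> + g * dx (dy \<phi>)" unfolding gy by (rule dx_mult)
  have 3: "dz (dx f) = dz g * dx \<phi> + g * dz (dx \<phi>)" unfolding gx by (rule dz_mult)
  have 4: "dx (dz f) = dx g * dz \<phi> + g * dx (dz \<phi>)" unfolding gz by (rule dx_mult)
  have 5: "dz (dy f) = dz g * dy \<phi> + g * dz (dy \<phi>)" unfolding gy by (rule dz_mult)
  have 6: "dy (dz f) = dy g * dz \<phi> + g * dy (dz \<phi>)" unfolding gz by (rule dy_mult)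
  have a: "dy g * dx \<phi> = dx g * dy \<phi>" using 1 2 dydx[of f] dydx[of \<phi>] by simp
  have b: "dz g * dx \<phi> = dx g * dz \<phi>" using 3 4 dzdx[of f] dzdx[of \<phi>] by simp
  have c: "dz g * dy \<phi> = dy g * dz \<phi>" using 5 6 dzdy[of f] dzdy[of \<phi>] by simp
  show ?thesis unfolding cross_zero_def using a b c by simp
qed

lemma mpd_pCons: "map_poly pderiv [:p:] = [:pderiv p:]" by (simp add: map_poly_pCons)
lemma mmpd_pCons: "map_poly (map_poly pderiv) [:p:] = [:map_poly pderiv p:]" by (simp add: map_poly_pCons)

lemma grad0_const:
  assumes "dx h = 0" "dy h = 0" "dz (h :: 'a::field_char_0 mpoly3) = 0"
  shows "\<exists>c. h = C3 c"
proof -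
  have "degree h = 0" using assms(3) by (simp add: dz_def pderiv_eq_0_iff)
  then obtain h0 where h0: "h = [:h0:]" by (metis degree_eq_zeroE)
  then have "pderiv h0 = 0" using assms(2) by (simp add: dy_def mpd_pCons)
  then have "degree h0 = 0" by (simp add: pderiv_eq_0_iff)
  then obtain h00 where h00: "h0 = [:h00:]" by (metis degree_eq_zeroE)
  then have "pderiv h00 = 0" using assms(1) h0 by (simp add: dx_def mmpd_pCons mpd_pCons)
  then have "degree h00 = 0" by (simp add: pderiv_eq_0_iff)
  then obtain c where "h00 = [:c:]" by (metis degree_eq_zeroE)
  then show ?thesis using h0 h00 by (auto simp: C3_def)
qed

lemma pderiv_sum: "pderiv (sum g A) = (\<Sum>i\<in>A. pderiv (g i))"
  by (rule sum_hom_add) (simp_all add: pderiv_add)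

lemma antideriv: "\<exists>Q. pderiv Q = (q :: 'a::field_char_0 poly)"
proof -
  define Q where "Q = (\<Sum>i\<le>degree q. monom (coeff q i / of_nat (Suc i)) (Suc i))"
  have "pderiv Q = (\<Sum>i\<le>degree q. monom (coeff q i) i)"
    unfolding Q_def pderiv_sum pderiv_monom
    by (intro sum.cong refl) (simp del: of_nat_Suc)
  then show ?thesis using poly_as_sum_of_monoms by metis
qed

lemma main_incl:
  assumes w: "whis w1 w2 w3 (\<phi> :: 'a::field_char_0 mpoly3)" and wh: "weight_hom w1 w2 w3 \<phi> d"
    and w3: "w3 > 0"
  shows "cross_zero \<phi> f \<Longrightarrow> \<exists>q. f = eval_at q \<phi>"
proof (induction "degree f" arbitrary: f rule: less_induct)
  case less
  obtain g where g: "dx f = g * dx \<phi>" "dy f = g * dy \<phi>" "dz f = g * dz \<phi>" "g = 0 \<or> degree g < degree f"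
    using grad_factor[OF w wh w3 less.prems] by blast
  have "\<exists>q. g = eval_at q \<phi>"
  proof (cases "g = 0")
    case True then show ?thesis by (metis eval_at_0)
  next
    case False
    then have "degree g < degree f" using g(4) by simp
    then show ?thesis using less.hyps grad_cross[OF g(1-3)] by blast
  qed
  then obtain q where q: "g = eval_at q \<phi>" by blast
  obtain Q where Q: "pderiv Q = q" using antideriv by blast
  define h where "h = f - eval_at Q \<phi>"
  have "dx h = 0" "dy h = 0" "dz h = 0"
    unfolding h_def by (simp_all add: dx_diff dy_diff dz_diff dx_eval dy_eval dz_eval Q g q)
  then obtain c where "h = C3 c" using grad0_const by blast
  moreover have "f = eval_at Q \<phi> + h" by (simp add: h_def)
  ultimately have "f = eval_at (Q + [:c:]) \<phi>" by (simp add: eval_at_add eval_at_const)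
  then show ?case by blast
qed

theorem mainTheorem3:
  fixes \<phi> :: "'a::field_char_0 mpoly3" and w1 w2 w3 :: nat
  assumes "w1 > 0" "w2 > 0" "w3 > 0" "gcd w1 (gcd w2 w3) = 1"
    and "whis w1 w2 w3 \<phi>"
  shows "Cas \<phi> = {f. cross_zero \<phi> f}
       \<and> {f. cross_zero \<phi> f} = range (\<lambda>q. eval_at q \<phi>)
       \<and> inj (\<lambda>q. eval_at q \<phi>)"
proof (intro conjI)
  show "Cas \<phi> = {f. cross_zero \<phi> f}" by (rule Cas_eq)
  obtain d where wh: "weight_hom w1 w2 w3 \<phi> d" using assms(5) by (auto simp: whis_def)
  show "{f. cross_zero \<phi> f} = range (\<lambda>q. eval_at q \<phi>)"
    using main_incl[OF assms(5) wh assms(3)] range_cross by blast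
  show "inj (\<lambda>q. eval_at q \<phi>)" by (rule eval_at_inj[OF deg_pos[OF assms(5)]])
qed


end
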